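(* Let $\kappa$ be a regular uncountable limit cardinal, and let $J_\kappa=\{X\subseteq\kappa:\exists f:X\to\kappa\ \exists\theta<\kappa\ (f \text{ is regressive and } |f^{-1}(\{\eta\})|\le\theta \text{ for all }\eta<\kappa)\}$. Then $J_\kappa$ is not prepleasant: with $L'=\{\lambda+1:\lambda<\kappa \text{ an infinite cardinal}\}$ and $A_{\lambda+1}=(\lambda+1,\lambda^+)$ for $\lambda+1\in L'$, one has $L'\in J_\kappa$, each $A_{\lambda+1}$ bounded in $\kappa$, but $L'\cup\bigtriangledown_{\lambda+1\in L'}A_{\lambda+1}\notin J_\kappa$.
   Context: A function $f:X\to\kappa$ with $X\subseteq\kappa$ is regressive if $f(\alpha)<\alpha$ for all $\alpha\in X\setminus\{0\}$. For $A\subseteq\kappa$ and $X_\alpha\subseteq\kappa$, $\bigtriangledown_{\alpha\in A}X_\alpha=\{\xi<\kappa:\exists\alpha<\xi\,(\alpha\in A\wedge \xi\in X_\alpha)\}$. An ideal $I$ on $\kappa$ is prepleasant if for every $Q\in I$ and every sequence $\langle B_\alpha\rangle_{\alpha<\kappa}$ of bounded subsets of $\kappa$, $\bigtriangledown_{\alpha\in Q}B_\alpha\in I$. $(\lambda+1,\lambda^+)$ denotes the open ordinal interval. *)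

theory Defs
  imports Main "HOL-Library.Equipollence" "HOL-Library.Countable_Set"
begin

text \<open>The cardinal kappa is modelled as a well-ordered type 'a whose order type is kappa:
  the elements of 'a are the ordinals below kappa, and an ordinal alpha < kappa is
  identified with its initial segment seg alpha.\<close>

definition seg :: "'a::wellorder \<Rightarrow> 'a set" where
  "seg \<alpha> = {x. x < \<alpha>}"

definition zero_ord :: "'a::wellorder" where
  "zero_ord = (LEAST x. True)"

definition succ_ord :: "'a::wellorder \<Rightarrow> 'a" where
  "succ_ord \<alpha> = (LEAST y. \<alpha> < y)"

definition is_cardinal :: "'a::wellorder \<Rightarrow> bool" where
  "is_cardinal l \<longleftrightarrow> (\<forall>\<beta><l. seg \<beta> \<prec> seg l)"

definition card_succ :: "'a::wellorder \<Rightarrow> 'a" where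
  "card_succ l = (LEAST y. seg l \<prec> seg y)"

definition regular_uncountable_limit_cardinal :: "'a::wellorder itself \<Rightarrow> bool" where
  "regular_uncountable_limit_cardinal (t::'a::wellorder itself) \<longleftrightarrow>
     (\<forall>x::'a::wellorder. seg x \<prec> (UNIV::'a::wellorder set)) \<and>
     uncountable (UNIV::'a::wellorder set) \<and>
     (\<forall>x::'a::wellorder. \<exists>y::'a. seg x \<prec> seg y) \<and>
     (\<forall>S::'a::wellorder set. (\<forall>x. \<exists>y\<in>S. x \<le> y) \<longrightarrow> S \<approx> (UNIV::'a::wellorder set))"

definition regressive_on :: "'a set \<Rightarrow> ('a::wellorder \<Rightarrow> 'a) \<Rightarrow> bool" where
  "regressive_on X f \<longleftrightarrow> (\<forall>\<alpha>\<in>X. \<alpha> \<noteq> zero_ord \<longrightarrow> f \<alpha> < \<alpha>)"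

definition J_kappa :: "'a::wellorder set set" where
  "J_kappa = {X. \<exists>(f::'a\<Rightarrow>'a) (\<theta>::'a). regressive_on X f \<and> (\<forall>\<eta>. {x\<in>X. f x = \<eta>} \<lesssim> seg \<theta>)}"

definition bounded_ord :: "'a::wellorder set \<Rightarrow> bool" where
  "bounded_ord B \<longleftrightarrow> (\<exists>\<beta>. \<forall>x\<in>B. x < \<beta>)"

definition diag_union :: "'a::wellorder set \<Rightarrow> ('a \<Rightarrow> 'a set) \<Rightarrow> 'a set" where
  "diag_union A X = {\<xi>. \<exists>\<alpha><\<xi>. \<alpha> \<in> A \<and> \<xi> \<in> X \<alpha>}"

definition prepleasant :: "'a::wellorder set set \<Rightarrow> bool" where
  "prepleasant I \<longleftrightarrow>
     (\<forall>Q\<in>I. \<forall>B::'a \<Rightarrow> 'a set. (\<forall>\<alpha>. bounded_ord (B \<alpha>)) \<longrightarrow> diag_union Q B \<in> I)"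

definition L' :: "'a::wellorder set" where
  "L' = {succ_ord l | l::'a. is_cardinal l \<and> infinite (seg l)}"

definition A_seq :: "'a::wellorder \<Rightarrow> 'a set" where
  "A_seq \<alpha> = (if \<alpha> \<in> L' then
      {x. \<alpha> < x \<and> x < card_succ (THE l::'a. is_cardinal l \<and> infinite (seg l) \<and> succ_ord l = \<alpha>)}
    else {})"

end

theory Submission
  imports Defs
begin

unbundle cardinal_syntax

lemma lep_iff: "A \<lesssim> B \<longleftrightarrow> |A| \<le>o |B|"
  by (simp add: lepoll_def card_of_ordLeq[symmetric])

lemma un_lep:
  assumes "infinite L" "A \<lesssim> L" "B \<lesssim> L"
  shows "A \<union> B \<lesssim> L"
proof -
  have "|A \<union> B| \<le>o |L|"
    using card_of_Un_ordLeq_infinite_Field[of "|L|" A B] assms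
    by (simp add: lep_iff Field_card_of card_of_Card_order card_of_card_order_on)
  then show ?thesis by (simp add: lep_iff)
qed

lemma core:
  fixes f :: "'a::wellorder \<Rightarrow> 'a" and Z :: "'a set" and L :: "'b set"
  assumes inf: "infinite L"
    and fib: "\<forall>\<eta>. {x\<in>Z. f x = \<eta>} \<lesssim> L"
    and reg: "\<forall>\<xi>\<in>Z. f \<xi> < \<xi>"
    and conv: "\<forall>\<xi>\<in>Z. \<forall>\<zeta>. c \<le> \<zeta> \<and> \<zeta> < \<xi> \<longrightarrow> \<zeta> \<in> Z"
    and segc: "seg c \<lesssim> L"
  shows "Z \<lesssim> L"
proof -
  define D where "D n = rec_nat (seg c) (\<lambda>_ S. {x\<in>Z. f x \<in> S}) n" for n
  have D0: "D 0 = seg c" by (simp add: D_def)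
  have DS: "D (Suc n) = {x\<in>Z. f x \<in> D n}" for n by (simp add: D_def)
  have cov: "\<xi> \<in> Z \<longrightarrow> (\<exists>n. \<xi> \<in> D n)" for \<xi>
  proof (induction \<xi> rule: less_induct)
    case (less \<xi>)
    show ?case
    proof
      assume Z: "\<xi> \<in> Z"
      show "\<exists>n. \<xi> \<in> D n"
      proof (cases "f \<xi> < c")
        case True
        then have "\<xi> \<in> D (Suc 0)" using Z by (simp add: DS D0 seg_def)
        then show ?thesis by blast
      next
        case False
        then have "f \<xi> \<in> Z" using conv Z reg by auto
        then obtain n where "f \<xi> \<in> D n" using less.IH reg Z by blast
        then have "\<xi> \<in> D (Suc n)" using Z by (simp add: DS)
        then show ?thesis by blast
      qed
    qed
  qed
  have Dn: "D n \<lesssim> L" for n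
  proof (induction n)
    case 0 then show ?case using segc D0 by simp
  next
    case (Suc n)
    have eq: "D (Suc n) = (\<Union>\<eta>\<in>D n. {x\<in>Z. f x = \<eta>})" by (auto simp: DS)
    have h: "\<forall>\<eta>\<in>D n. |{x\<in>Z. f x = \<eta>}| \<le>o |L|" using fib by (simp add: lep_iff)
    have "|\<Union>\<eta>\<in>D n. {x\<in>Z. f x = \<eta>}| \<le>o |L|"
      by (rule card_of_UNION_ordLeq_infinite[OF inf _ h]) (use Suc.IH in \<open>simp add: lep_iff\<close>)
    then show ?case using eq by (simp add: lep_iff)
  qed
  have "Z \<subseteq> (\<Union>n. D n)" using cov by blast
  moreover have "|\<Union>n. D n| \<le>o |L|"
    using card_of_UNION_ordLeq_infinite[OF inf, of "UNIV::nat set" D] Dn inf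
    by (simp add: lep_iff[symmetric] infinite_le_lepoll)
  ultimately show ?thesis
    by (meson lep_iff subset_imp_lepoll lepoll_trans)
qed

lemma ex_gt:
  assumes gt: "\<forall>x::'a::wellorder. \<exists>y::'a. seg x \<prec> seg y"
  shows "\<exists>y. (x::'a) < y"
proof -
  obtain y :: 'a where y: "seg x \<prec> seg y" using gt by blast
  show ?thesis
  proof (rule ccontr)
    assume "\<not> ?thesis"
    then have "y \<le> x" by (meson not_le)
    then have "seg y \<subseteq> seg x" by (auto simp: seg_def)
    then have "seg y \<lesssim> seg x" by (rule subset_imp_lepoll)
    then show False using y lesspoll_trans1 by blast
  qed
qed

lemma succ_gt: "\<forall>x::'a::wellorder. \<exists>y::'a. seg x \<prec> seg y \<Longrightarrow> (x::'a) < succ_ord x"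
  unfolding succ_ord_def using ex_gt by (rule LeastI_ex)

lemma succ_least: "(x::'a::wellorder) < y \<Longrightarrow> succ_ord x \<le> y"
  unfolding succ_ord_def by (rule Least_le)

lemma lt_succ_iff: "\<forall>x::'a::wellorder. \<exists>y::'a. seg x \<prec> seg y \<Longrightarrow> (y::'a) < succ_ord x \<longleftrightarrow> y \<le> x"
  using succ_gt succ_least by (meson le_less_trans not_le)

lemma succ_inj: "\<forall>x::'a::wellorder. \<exists>y::'a. seg x \<prec> seg y \<Longrightarrow> succ_ord (a::'a) = succ_ord b \<Longrightarrow> a = b"
  by (metis lt_succ_iff order.antisym order.refl)

lemma zero_le: "zero_ord \<le> (x::'a::wellorder)"
  unfolding zero_ord_def by (rule Least_le) simp


lemma ex_inf_seg:
  assumes "uncountable (UNIV::'a::wellorder set)"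
  shows "\<exists>x::'a. infinite (seg x)"
proof (rule ccontr)
  assume "\<not> ?thesis"
  then have fin: "\<And>x::'a. finite (seg x)" by blast
  have "inj (\<lambda>x::'a. card (seg x))"
  proof (rule injI)
    fix x y :: 'a
    assume eq: "card (seg x) = card (seg y)"
    show "x = y"
    proof (rule ccontr)
      assume "x \<noteq> y"
      then consider "x < y" | "y < x" by (meson neqE)
      then show False
      proof cases
        case 1
        then have "seg x \<subset> seg y" by (auto simp: seg_def)
        then have "card (seg x) < card (seg y)" by (rule psubset_card_mono[OF fin])
        then show False using eq by simp
      next
        case 2
        then have "seg y \<subset> seg x" by (auto simp: seg_def)
        then have "card (seg y) < card (seg x)" by (rule psubset_card_mono[OF fin])
        then show False using eq by simp
      qed
    qed
  qed
  then have "countable (UNIV::'a set)" by (auto simp: countable_def)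
  then show False using assms by simp
qed

lemma ex_card:
  assumes "uncountable (UNIV::'a::wellorder set)"
  shows "\<exists>l::'a. is_cardinal l \<and> infinite (seg l) \<and> seg (\<theta>::'a) \<lesssim> seg l"
proof -
  obtain x0 :: 'a where x0: "infinite (seg x0)" using ex_inf_seg[OF assms] by blast
  define m where "m = max x0 \<theta>"
  define l where "l = (LEAST y::'a. seg y \<approx> seg m)"
  have lm: "seg l \<approx> seg m" unfolding l_def by (rule LeastI[of _ m]) simp
  have card: "is_cardinal l"
    unfolding is_cardinal_def
  proof (intro allI impI)
    fix \<beta> assume b: "\<beta> < l"
    have "seg \<beta> \<subseteq> seg l" using b by (auto simp: seg_def)
    then have "seg \<beta> \<lesssim> seg l" by (rule subset_imp_lepoll)
    moreover have "\<not> seg \<beta> \<approx> seg l"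
    proof
      assume "seg \<beta> \<approx> seg l"
      then have "seg \<beta> \<approx> seg m" using lm eqpoll_trans by blast
      then have "l \<le> \<beta>" unfolding l_def by (rule Least_le)
      then show False using b by simp
    qed
    ultimately show "seg \<beta> \<prec> seg l" by (simp add: lesspoll_def)
  qed
  have "seg x0 \<subseteq> seg m" "seg \<theta> \<subseteq> seg m" by (auto simp: seg_def m_def less_max_iff_disj)
  then have "infinite (seg m)" "seg \<theta> \<lesssim> seg m" using x0 finite_subset subset_imp_lepoll by blast+
  moreover have "seg m \<lesssim> seg l" using lm eqpoll_sym eqpoll_imp_lepoll by blast
  moreover have "infinite (seg l)" using lm eqpoll_finite_iff \<open>infinite (seg m)\<close> by blast
  ultimately show ?thesis using card lepoll_trans by blast
qed

lemma seg_succ: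
  assumes "\<forall>x::'a::wellorder. \<exists>y::'a. seg x \<prec> seg y"
  shows "seg (succ_ord (x::'a)) = insert x (seg x)"
  using lt_succ_iff[OF assms] by (auto simp: seg_def)

lemma main_not_J:
  assumes A: "regular_uncountable_limit_cardinal TYPE('a::wellorder)"
    and sub: "diag_union L' A_seq \<subseteq> (X::'a set)"
  shows "X \<notin> J_kappa"
proof
  assume "X \<in> J_kappa"
  then obtain f :: "'a \<Rightarrow> 'a" and \<theta> :: 'a where
    reg: "regressive_on X f" and fib: "\<forall>\<eta>. {x\<in>X. f x = \<eta>} \<lesssim> seg \<theta>"
    unfolding J_kappa_def by blast
  have gt: "\<forall>x::'a. \<exists>y::'a. seg x \<prec> seg y" and unc: "uncountable (UNIV::'a set)"
    using A unfolding regular_uncountable_limit_cardinal_def by blast+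
  obtain l :: 'a where lc: "is_cardinal l" and linf: "infinite (seg l)" and tl: "seg \<theta> \<lesssim> seg l"
    using ex_card[OF unc] by blast
  define K where "K = card_succ l"
  have lK: "seg l \<prec> seg K" unfolding K_def card_succ_def
    by (rule LeastI_ex) (use gt in blast)
  define Z where "Z = {x. succ_ord l < x \<and> x < K}"
  define c where "c = succ_ord (succ_ord l)"
  have segc: "seg c \<lesssim> seg l"
  proof -
    have e: "seg c = insert (succ_ord l) (insert l (seg l))"
      unfolding c_def using seg_succ[OF gt] by simp
    have b: "insert l (seg l) \<lesssim> seg l" by (rule infinite_insert_lepoll[OF linf])
    have a: "insert (succ_ord l) (insert l (seg l)) \<lesssim> insert l (seg l)"
      by (rule infinite_insert_lepoll) (simp add: linf)
    show ?thesis unfolding e by (rule lepoll_trans[OF a b])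
  qed
  have Lmem: "succ_ord l \<in> L'" unfolding L'_def using lc linf by blast
  have the_l: "(THE l'::'a. is_cardinal l' \<and> infinite (seg l') \<and> succ_ord l' = succ_ord l) = l"
    by (rule the_equality) (use lc linf succ_inj[OF gt] in auto)
  have ZX: "Z \<subseteq> X"
  proof
    fix \<xi> assume "\<xi> \<in> Z"
    then have "succ_ord l < \<xi> \<and> succ_ord l \<in> L' \<and> \<xi> \<in> A_seq (succ_ord l)"
      using Lmem the_l by (simp add: Z_def A_seq_def K_def)
    then show "\<xi> \<in> X" using sub unfolding diag_union_def by blast
  qed
  have "Z \<lesssim> seg l"
  proof (rule core[where f = f and c = c])
    show "infinite (seg l)" by fact
    show "\<forall>\<eta>. {x\<in>Z. f x = \<eta>} \<lesssim> seg l"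
    proof
      fix \<eta>
      have s1: "{x\<in>Z. f x = \<eta>} \<subseteq> {x\<in>X. f x = \<eta>}" using ZX by blast
      have s2: "{x\<in>X. f x = \<eta>} \<lesssim> seg \<theta>" using fib by (rule spec)
      show "{x\<in>Z. f x = \<eta>} \<lesssim> seg l"
        by (rule lepoll_trans[OF subset_imp_lepoll[OF s1] lepoll_trans[OF s2 tl]])
    qed
    show "\<forall>\<xi>\<in>Z. f \<xi> < \<xi>"
    proof
      fix \<xi> assume z: "\<xi> \<in> Z"
      then have "\<xi> \<noteq> zero_ord" using zero_le[of "succ_ord l"] by (auto simp: Z_def)
      then show "f \<xi> < \<xi>" using reg z ZX unfolding regressive_on_def by blast
    qed
    show "\<forall>\<xi>\<in>Z. \<forall>\<zeta>. c \<le> \<zeta> \<and> \<zeta> < \<xi> \<longrightarrow> \<zeta> \<in> Z"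
      using succ_gt[OF gt, of "succ_ord l"] by (auto simp: Z_def c_def)
    show "seg c \<lesssim> seg l" by fact
  qed
  have "seg K \<subseteq> seg c \<union> Z"
  proof
    fix x assume xK: "x \<in> seg K"
    show "x \<in> seg c \<union> Z"
    proof (cases "x < c")
      case True then show ?thesis by (simp add: seg_def)
    next
      case False
      have "succ_ord l < c" by (simp add: c_def succ_gt[OF gt])
      then show ?thesis using False xK by (auto simp: Z_def seg_def)
    qed
  qed
  then have "seg K \<lesssim> seg l"
    by (rule lepoll_trans[OF subset_imp_lepoll un_lep[OF linf segc \<open>Z \<lesssim> seg l\<close>]])
  from lesspoll_trans2[OF lK this] show False by simp
qed

lemma L'_J:
  assumes A: "regular_uncountable_limit_cardinal TYPE('a::wellorder)"
  shows "(L'::'a set) \<in> J_kappa"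
proof -
  have gt: "\<forall>x::'a. \<exists>y::'a. seg x \<prec> seg y"
    using A unfolding regular_uncountable_limit_cardinal_def by blast
  define f where "f = (\<lambda>x::'a. THE l. succ_ord l = x)"
  have fs: "f (succ_ord l) = l" for l
    unfolding f_def by (rule the_equality) (use succ_inj[OF gt] in auto)
  define \<theta> where "\<theta> = succ_ord (zero_ord::'a)"
  have st: "seg \<theta> = {zero_ord}"
    using lt_succ_iff[OF gt] zero_le by (auto simp: seg_def \<theta>_def intro: order.antisym)
  have "regressive_on L' f"
    unfolding regressive_on_def L'_def using fs succ_gt[OF gt] by auto
  moreover have "{x\<in>L'. f x = \<eta>} \<lesssim> seg \<theta>" for \<eta>
  proof -
    have "{x\<in>L'. f x = \<eta>} \<subseteq> {succ_ord \<eta>}" unfolding L'_def using fs by auto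
    then have "{x\<in>L'. f x = \<eta>} \<lesssim> {succ_ord \<eta>}" by (rule subset_imp_lepoll)
    moreover have "{succ_ord \<eta>} \<lesssim> seg \<theta>" unfolding st
      by (rule eqpoll_imp_lepoll[OF singleton_eqpoll])
    ultimately show ?thesis by (rule lepoll_trans)
  qed
  ultimately show ?thesis unfolding J_kappa_def by blast
qed

theorem mainTheorem7:
  assumes "regular_uncountable_limit_cardinal TYPE('a::wellorder)"
  shows "\<not> prepleasant (J_kappa :: 'a set set)
     \<and> (L' :: 'a set) \<in> J_kappa
     \<and> (\<forall>\<alpha>\<in>(L' :: 'a set). bounded_ord (A_seq \<alpha>))
     \<and> (L' :: 'a set) \<union> diag_union L' A_seq \<notin> J_kappa"
proof -
  have LJ: "(L' :: 'a set) \<in> J_kappa" using L'_J[OF assms] .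
  have bd: "bounded_ord (A_seq (\<alpha>::'a))" for \<alpha>
    unfolding bounded_ord_def A_seq_def by (cases "\<alpha> \<in> L'") auto
  have nd: "diag_union L' A_seq \<notin> (J_kappa :: 'a set set)"
    by (rule main_not_J[OF assms subset_refl])
  have nu: "(L' :: 'a set) \<union> diag_union L' A_seq \<notin> J_kappa"
    by (rule main_not_J[OF assms Un_upper2])
  have "\<not> prepleasant (J_kappa :: 'a set set)"
  proof
    assume "prepleasant (J_kappa :: 'a set set)"
    then have "diag_union L' A_seq \<in> (J_kappa :: 'a set set)"
      unfolding prepleasant_def using LJ bd by blast
    then show False using nd by contradiction
  qed
  then show ?thesis using LJ bd nu by blast
qed

end
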